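(* Let $p$ be a prime number and $(t,R_1,R_2)\in\mathcal{F}$. The map $F_{t,R_1,R_2}=(J,H):\mathrm{S}^2_p\times\mathrm{S}^2_p\to\mathbb{Q}_p^2$, $J=R_1z_1+R_2z_2$, $H=(1-t)z_1+t(x_1x_2+y_1y_2+z_1z_2)$, has exactly four rank $0$ critical points, namely $P=(0,0,1,0,0,1)$, $Q=(0,0,-1,0,0,1)$, $S=(0,0,1,0,0,-1)$, $T=(0,0,-1,0,0,-1)$.
   Context: $\mathrm{S}^2_p=\{(x,y,z)\in\mathbb{Q}_p^3:x^2+y^2+z^2=1\}$ is the $p$-adic sphere (a $p$-adic analytic manifold of dimension $2$), and $(x_1,y_1,z_1,x_2,y_2,z_2)$ are the coordinates on $\mathrm{S}^2_p\times\mathrm{S}^2_p$. $\mathcal{F}=\{(t,R_1,R_2)\in\mathbb{Z}_p\times\mathbb{Q}_p^2:|R_2|_p>|R_1|_p>0\}$. A rank $0$ critical point is a point $m$ with $dJ_m=dH_m=0$. *)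

theory Defs
  imports "HOL-Analysis.Analysis" "HOL-Computational_Algebra.Primes"
begin

definition padic_val_rat :: "nat \<Rightarrow> rat \<Rightarrow> int" where
  "padic_val_rat p q = (case quotient_of q of (a, b) \<Rightarrow>
      int (multiplicity (int p) a) - int (multiplicity (int p) b))"

definition padic_abs_rat :: "nat \<Rightarrow> rat \<Rightarrow> real" where
  "padic_abs_rat p q = (if q = 0 then 0 else real p powr (- real_of_int (padic_val_rat p q)))"

text \<open>This characterises Q_p up to isometric isomorphism.\<close>

definition is_Qp :: "nat \<Rightarrow> ('a::field_char_0 \<Rightarrow> real) \<Rightarrow> bool" where
  "is_Qp p N \<longleftrightarrow>
     (\<forall>x. N x = 0 \<longleftrightarrow> x = 0) \<and>
     (\<forall>x. 0 \<le> N x) \<and>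
     (\<forall>x y. N (x * y) = N x * N y) \<and>
     (\<forall>x y. N (x + y) \<le> max (N x) (N y)) \<and>
     (\<forall>q. N (of_rat q) = padic_abs_rat p q) \<and>
     (\<forall>x e. e > 0 \<longrightarrow> (\<exists>q. N (x - of_rat q) < e)) \<and>
     (\<forall>X :: nat \<Rightarrow> 'a. (\<forall>e>0. \<exists>M. \<forall>m\<ge>M. \<forall>n\<ge>M. N (X m - X n) < e)
          \<longrightarrow> (\<exists>l. \<forall>e>0. \<exists>M. \<forall>n\<ge>M. N (X n - l) < e))"

definition Zp :: "('a \<Rightarrow> real) \<Rightarrow> 'a set" where
  "Zp N = {x. N x \<le> 1}"

definition vnorm :: "('a \<Rightarrow> real) \<Rightarrow> 'a ^ 'n::finite \<Rightarrow> real" where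
  "vnorm N v = Max (range (\<lambda>i. N (v $ i)))"

definition has_vderiv ::
  "('a::field \<Rightarrow> real) \<Rightarrow> ('a ^ 'n::finite \<Rightarrow> 'a) \<Rightarrow> ('a ^ 'n \<Rightarrow> 'a) \<Rightarrow> 'a ^ 'n \<Rightarrow> bool" where
  "has_vderiv N f L m \<longleftrightarrow>
     (\<forall>u v. L (u + v) = L u + L v) \<and> (\<forall>c v. L (c *s v) = c * L v) \<and>
     (\<forall>e>0. \<exists>d>0. \<forall>v. vnorm N v < d \<longrightarrow> N (f (m + v) - f m - L v) \<le> e * vnorm N v)"

text \<open>Coordinates: m = (x1,y1,z1,x2,y2,z2) = (m$0, m$1, m$2, m$3, m$4, m$5).\<close>

definition sph1 :: "'a::field ^ 6 \<Rightarrow> 'a" where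
  "sph1 m = (m$0)^2 + (m$1)^2 + (m$2)^2 - 1"
definition sph2 :: "'a::field ^ 6 \<Rightarrow> 'a" where
  "sph2 m = (m$3)^2 + (m$4)^2 + (m$5)^2 - 1"

definition SS :: "('a::field ^ 6) set" where
  "SS = {m. sph1 m = 0 \<and> sph2 m = 0}"

definition tangent_SS :: "('a::field \<Rightarrow> real) \<Rightarrow> 'a ^ 6 \<Rightarrow> ('a ^ 6) set" where
  "tangent_SS N m = {v. (\<forall>L. has_vderiv N sph1 L m \<longrightarrow> L v = 0) \<and>
                        (\<forall>L. has_vderiv N sph2 L m \<longrightarrow> L v = 0)}"

text \<open>d f_m = 0 for the restriction of f to SS: the differential of f at m vanishes on the tangent space.\<close>
definition dvanishes :: "('a::field \<Rightarrow> real) \<Rightarrow> ('a ^ 6 \<Rightarrow> 'a) \<Rightarrow> 'a ^ 6 \<Rightarrow> bool" where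
  "dvanishes N f m \<longleftrightarrow> (\<exists>L. has_vderiv N f L m \<and> (\<forall>v\<in>tangent_SS N m. L v = 0))"

definition Jfun :: "'a::field \<Rightarrow> 'a \<Rightarrow> 'a ^ 6 \<Rightarrow> 'a" where
  "Jfun R1 R2 m = R1 * m$2 + R2 * m$5"

definition Hfun :: "'a::field \<Rightarrow> 'a ^ 6 \<Rightarrow> 'a" where
  "Hfun t m = (1 - t) * m$2 + t * (m$0 * m$3 + m$1 * m$4 + m$2 * m$5)"

definition rank0_critical :: "('a::field \<Rightarrow> real) \<Rightarrow> 'a \<Rightarrow> 'a \<Rightarrow> 'a \<Rightarrow> ('a ^ 6) set" where
  "rank0_critical N t R1 R2 =
     {m \<in> SS. dvanishes N (Jfun R1 R2) m \<and> dvanishes N (Hfun t) m}"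

definition coords6 :: "'a ^ 6 \<Rightarrow> 'a \<times> 'a \<times> 'a \<times> 'a \<times> 'a \<times> 'a" where
  "coords6 m = (m$0, m$1, m$2, m$3, m$4, m$5)"

end

theory Submission
  imports Defs
begin

lemma Nprops:
  assumes "is_Qp p N"
  shows "N x = 0 \<longleftrightarrow> x = 0" "0 \<le> N x" "N (x * y) = N x * N y"
        "N (x + y) \<le> max (N x) (N y)"
  using assms unfolding is_Qp_def by auto

lemma N_one: assumes "is_Qp p N" shows "N 1 = 1"
proof -
  have "N 1 = N 1 * N 1" using Nprops(3)[OF assms, of 1 1] by simp
  moreover have "N 1 \<noteq> 0" using Nprops(1)[OF assms, of 1] by simp
  ultimately show ?thesis by (metis mult_cancel_left1)
qed

lemma N_minus: assumes "is_Qp p N" shows "N (- x) = N x"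
proof -
  have "N (-1) * N (-1) = 1" using Nprops(3)[OF assms, of "-1" "-1"] N_one[OF assms] by simp
  moreover have "N (-1) \<ge> 0" using Nprops(2)[OF assms] by simp
  ultimately have "N (-1) = 1"
    by (metis abs_of_nonneg abs_square_eq_1 power2_eq_square)
  then show ?thesis using Nprops(3)[OF assms, of "-1" x] by simp
qed

lemma N_ultra3: assumes "is_Qp p N"
  shows "N (a + b + c) \<le> max (N a) (max (N b) (N c))"
  using Nprops(4)[OF assms, of "a+b" c] Nprops(4)[OF assms, of a b] by linarith

lemma N_p: assumes "is_Qp p N" "prime p"
  shows "N (of_nat p) = inverse (real p)"
proof -
  have q: "quotient_of (of_nat p) = (int p, 1)"
    using quotient_of_rat_of_int[of "int p"] by simp
  have "padic_val_rat p (of_nat p) = 1"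
    unfolding padic_val_rat_def q using assms(2)
    by (simp add: multiplicity_self prime_gt_0_nat)
  moreover have "of_rat (of_nat p) = (of_nat p :: 'a)" by simp
  moreover have "(of_nat p :: rat) \<noteq> 0" using assms(2) by (simp add: prime_gt_0_nat)
  ultimately show ?thesis using assms(1) unfolding is_Qp_def padic_abs_rat_def
    by (metis powr_minus_divide powr_one_eq_one powr_one inverse_eq_divide of_int_1 of_nat_0_le_iff powr_one_gt_zero_iff)
qed

lemma small_elt: assumes "is_Qp p N" "prime p" "d > 0"
  shows "\<exists>c::'a::field_char_0. c \<noteq> 0 \<and> N c < d"
proof -
  have p1: "real p > 1" using assms(2) prime_gt_1_nat by auto
  then have "inverse (real p) < 1" by (simp add: inverse_less_1_iff)
  then obtain k where k: "inverse (real p) ^ k < d" using real_arch_pow_inv assms(3) by blast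
  have "N ((of_nat p :: 'a) ^ k) = inverse (real p) ^ k"
  proof (induction k)
    case 0 then show ?case using N_one[OF assms(1)] by simp
  next
    case (Suc k) then show ?case using Nprops(3)[OF assms(1)] N_p[OF assms(1,2)] by simp
  qed
  moreover have "(of_nat p :: 'a) ^ k \<noteq> 0" using p1 by simp
  ultimately show ?thesis using k by metis
qed

lemma vnorm_comp: "N (v $ i) \<le> vnorm N v"
  unfolding vnorm_def by (rule Max_ge) auto

lemma vnorm_nonneg: assumes "is_Qp p N" shows "0 \<le> vnorm N v"
  using vnorm_comp[of N v undefined] Nprops(2)[OF assms, of "v $ undefined"] by linarith

lemma vnorm_smult: assumes "is_Qp p N" shows "vnorm N (c *s v) \<le> N c * vnorm N v"
  unfolding vnorm_def[of N "c *s v"]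
proof (rule Max.boundedI)
  show "finite (range (\<lambda>i. N ((c *s v) $ i)))" by simp
  show "range (\<lambda>i. N ((c *s v) $ i)) \<noteq> {}" by simp
  fix a assume "a \<in> range (\<lambda>i. N ((c *s v) $ i))"
  then obtain i where "a = N (c * v $ i)" by auto
  then show "a \<le> N c * vnorm N v"
    using Nprops(3)[OF assms] Nprops(2)[OF assms, of c] vnorm_comp[of N v i]
    by (simp add: mult_left_mono)
qed

lemma vderiv_unique:
  fixes N :: "'a::field_char_0 \<Rightarrow> real"
  assumes Q: "is_Qp p N" and pr: "prime p"
    and d1: "has_vderiv N f L m" and d2: "has_vderiv N f L' m"
  shows "L = L'"
proof
  fix v
  show "L v = L' v"
  proof (rule ccontr)
    assume ne: "L v \<noteq> L' v"
    define D where "D = N (L v - L' v)"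
    have Dp: "D > 0" using ne Nprops(1,2)[OF Q, of "L v - L' v"] unfolding D_def by auto
    define K where "K = vnorm N v + 1"
    have "0 \<le> vnorm N v" by (rule vnorm_nonneg[OF Q])
    then have K: "K > 0" "vnorm N v < K" unfolding K_def by linarith+
    define e where "e = D / (2 * K)"
    have ep: "e > 0" using Dp K unfolding e_def by simp
    obtain d1' where d1': "d1' > 0" "\<forall>w. vnorm N w < d1' \<longrightarrow> N (f (m + w) - f m - L w) \<le> e * vnorm N w"
      using d1 ep unfolding has_vderiv_def by blast
    obtain d2' where d2': "d2' > 0" "\<forall>w. vnorm N w < d2' \<longrightarrow> N (f (m + w) - f m - L' w) \<le> e * vnorm N w"
      using d2 ep unfolding has_vderiv_def by blast
    obtain c where c: "c \<noteq> 0" "N c < min d1' d2' / K"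
      using small_elt[OF Q pr, of "min d1' d2' / K"] d1' d2' K by auto
    have Nc: "N c > 0" using c Nprops(1,2)[OF Q, of c] by auto
    have "vnorm N (c *s v) \<le> N c * vnorm N v" by (rule vnorm_smult[OF Q])
    also have "\<dots> \<le> N c * K" using K Nc by simp
    also have "\<dots> < min d1' d2'" using c K by (simp add: pos_less_divide_eq)
    finally have small: "vnorm N (c *s v) < d1'" "vnorm N (c *s v) < d2'" by auto
    define X where "X = f (m + c *s v) - f m"
    have A: "N (X - L (c *s v)) \<le> e * vnorm N (c *s v)" using d1' small unfolding X_def by blast
    have B: "N (X - L' (c *s v)) \<le> e * vnorm N (c *s v)" using d2' small unfolding X_def by blast
    have lin: "L (c *s v) = c * L v" "L' (c *s v) = c * L' v" using d1 d2 unfolding has_vderiv_def by auto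
    have "c * (L v - L' v) = (X - L' (c *s v)) + - (X - L (c *s v))" using lin by (simp add: algebra_simps)
    then have "N c * D \<le> max (N (X - L' (c *s v))) (N (X - L (c *s v)))"
      using Nprops(3,4)[OF Q] N_minus[OF Q] unfolding D_def by metis
    also have "\<dots> \<le> e * vnorm N (c *s v)" using A B by simp
    also have "\<dots> \<le> e * (N c * vnorm N v)" using vnorm_smult[OF Q] ep by (simp add: mult_left_mono)
    also have "\<dots> \<le> e * (N c * K)" using K Nc ep by (simp add: mult_left_mono)
    finally have "N c * D \<le> N c * (e * K)" by (simp add: algebra_simps)
    then have "D \<le> e * K" using Nc by simp
    also have "e * K = D / 2" unfolding e_def using K by simp
    finally show False using Dp by simp
  qed
qed

lemma quad_bound:
  assumes Q: "is_Qp p N" and "N a \<le> x" "N b \<le> y" "0 \<le> x" "0 \<le> y"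
  shows "N (a * b) \<le> x * y"
  using assms Nprops(2,3)[OF Q] by (simp add: mult_mono)

lemma deriv_sph1:
  assumes Q: "is_Qp p N"
  shows "has_vderiv N sph1 (\<lambda>v. 2 * (m$0 * v$0 + m$1 * v$1 + m$2 * v$2)) m"
  unfolding has_vderiv_def
proof (intro conjI allI impI)
  fix e :: real assume e: "e > 0"
  show "\<exists>d>0. \<forall>v. vnorm N v < d \<longrightarrow> N (sph1 (m + v) - sph1 m - 2 * (m$0 * v$0 + m$1 * v$1 + m$2 * v$2)) \<le> e * vnorm N v"
  proof (intro exI[of _ e] conjI allI impI)
    show "e > 0" by fact
    fix v :: "'a ^ 6" assume v: "vnorm N v < e"
    have eq: "sph1 (m + v) - sph1 m - 2 * (m$0 * v$0 + m$1 * v$1 + m$2 * v$2) = v$0* v$0 + v$1* v$1 + v$2* v$2"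
      unfolding sph1_def by (simp add: algebra_simps power2_eq_square)
    have vn: "0 \<le> vnorm N v" by (rule vnorm_nonneg[OF Q])
    have "\<And>i. N (v$i * v$i) \<le> vnorm N v * vnorm N v"
      using quad_bound[OF Q] vnorm_comp vn by blast
    then have "N (v$0* v$0 + v$1* v$1 + v$2* v$2) \<le> vnorm N v * vnorm N v"
      using N_ultra3[OF Q, of "v$0* v$0" "v$1* v$1" "v$2* v$2"] by (meson max.bounded_iff order_trans)
    also have "\<dots> \<le> e * vnorm N v" using v vn by (simp add: mult_right_mono)
    finally show "N (sph1 (m + v) - sph1 m - 2 * (m$0 * v$0 + m$1 * v$1 + m$2 * v$2)) \<le> e * vnorm N v"
      using eq by simp
  qed
qed (simp_all add: algebra_simps)

lemma deriv_sph2: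
  assumes Q: "is_Qp p N"
  shows "has_vderiv N sph2 (\<lambda>v. 2 * (m$3 * v$3 + m$4 * v$4 + m$5 * v$5)) m"
  unfolding has_vderiv_def
proof (intro conjI allI impI)
  fix e :: real assume e: "e > 0"
  show "\<exists>d>0. \<forall>v. vnorm N v < d \<longrightarrow> N (sph2 (m + v) - sph2 m - 2 * (m$3 * v$3 + m$4 * v$4 + m$5 * v$5)) \<le> e * vnorm N v"
  proof (intro exI[of _ e] conjI allI impI)
    show "e > 0" by fact
    fix v :: "'a ^ 6" assume v: "vnorm N v < e"
    have eq: "sph2 (m + v) - sph2 m - 2 * (m$3 * v$3 + m$4 * v$4 + m$5 * v$5) = v$3* v$3 + v$4* v$4 + v$5* v$5"
      unfolding sph2_def by (simp add: algebra_simps power2_eq_square)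
    have vn: "0 \<le> vnorm N v" by (rule vnorm_nonneg[OF Q])
    have "\<And>i. N (v$i * v$i) \<le> vnorm N v * vnorm N v"
      using quad_bound[OF Q] vnorm_comp vn by blast
    then have "N (v$3* v$3 + v$4* v$4 + v$5* v$5) \<le> vnorm N v * vnorm N v"
      using N_ultra3[OF Q, of "v$3* v$3" "v$4* v$4" "v$5* v$5"] by (meson max.bounded_iff order_trans)
    also have "\<dots> \<le> e * vnorm N v" using v vn by (simp add: mult_right_mono)
    finally show "N (sph2 (m + v) - sph2 m - 2 * (m$3 * v$3 + m$4 * v$4 + m$5 * v$5)) \<le> e * vnorm N v"
      using eq by simp
  qed
qed (simp_all add: algebra_simps)

lemma deriv_J:
  assumes Q: "is_Qp p N"
  shows "has_vderiv N (Jfun R1 R2) (\<lambda>v. R1 * v$2 + R2 * v$5) m"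
  unfolding has_vderiv_def
proof (intro conjI allI impI)
  fix e :: real assume e: "e > 0"
  show "\<exists>d>0. \<forall>v. vnorm N v < d \<longrightarrow> N (Jfun R1 R2 (m + v) - Jfun R1 R2 m - (R1 * v$2 + R2 * v$5)) \<le> e * vnorm N v"
    using e Nprops(1)[OF Q, of 0]
    by (intro exI[of _ e]) (auto simp: Jfun_def algebra_simps intro!: mult_nonneg_nonneg vnorm_nonneg[OF Q])
qed (simp_all add: algebra_simps)

lemma deriv_H:
  assumes Q: "is_Qp p N" and t: "N t \<le> 1"
  shows "has_vderiv N (Hfun t) (\<lambda>v. (1 - t) * v$2 + t * (m$0 * v$3 + v$0 * m$3 + m$1 * v$4 + v$1 * m$4 + m$2 * v$5 + v$2 * m$5)) m"
  unfolding has_vderiv_def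
proof (intro conjI allI impI)
  fix e :: real assume e: "e > 0"
  show "\<exists>d>0. \<forall>v. vnorm N v < d \<longrightarrow> N (Hfun t (m + v) - Hfun t m - ((1 - t) * v$2 + t * (m$0 * v$3 + v$0 * m$3 + m$1 * v$4 + v$1 * m$4 + m$2 * v$5 + v$2 * m$5))) \<le> e * vnorm N v"
  proof (intro exI[of _ e] conjI allI impI)
    show "e > 0" by fact
    fix v :: "'a ^ 6" assume v: "vnorm N v < e"
    have eq: "Hfun t (m + v) - Hfun t m - ((1 - t) * v$2 + t * (m$0 * v$3 + v$0 * m$3 + m$1 * v$4 + v$1 * m$4 + m$2 * v$5 + v$2 * m$5)) = t * (v$0* v$3 + v$1* v$4 + v$2* v$5)"
      unfolding Hfun_def by (simp add: algebra_simps)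
    have vn: "0 \<le> vnorm N v" by (rule vnorm_nonneg[OF Q])
    have "\<And>i j. N (v$i * v$j) \<le> vnorm N v * vnorm N v"
      using quad_bound[OF Q] vnorm_comp vn by blast
    then have s: "N (v$0* v$3 + v$1* v$4 + v$2* v$5) \<le> vnorm N v * vnorm N v"
      using N_ultra3[OF Q, of "v$0* v$3" "v$1* v$4" "v$2* v$5"] by (meson max.bounded_iff order_trans)
    have "N (t * (v$0* v$3 + v$1* v$4 + v$2* v$5)) \<le> 1 * (vnorm N v * vnorm N v)"
      using quad_bound[OF Q t s] vn by simp
    also have "\<dots> \<le> e * vnorm N v" using v vn by (simp add: mult_right_mono)
    finally show "N (Hfun t (m + v) - Hfun t m - ((1 - t) * v$2 + t * (m$0 * v$3 + v$0 * m$3 + m$1 * v$4 + v$1 * m$4 + m$2 * v$5 + v$2 * m$5))) \<le> e * vnorm N v"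
      using eq by simp
  qed
qed (simp_all add: algebra_simps)

lemma tangent_mem:
  fixes N :: "'a::field_char_0 \<Rightarrow> real" and m v :: "'a ^ 6"
  assumes Q: "is_Qp p N" and pr: "prime p"
    and o1: "m$0 * v$0 + m$1 * v$1 + m$2 * v$2 = 0"
    and o2: "m$3 * v$3 + m$4 * v$4 + m$5 * v$5 = 0"
  shows "v \<in> tangent_SS N m"
  unfolding tangent_SS_def
proof (intro CollectI conjI allI impI)
  fix L assume "has_vderiv N sph1 L m"
  then have eq: "L = (\<lambda>v. 2 * (m$0 * v$0 + m$1 * v$1 + m$2 * v$2))"
    using vderiv_unique[OF Q pr _ deriv_sph1[OF Q]] by blast
  show "L v = 0" unfolding eq by (simp only: o1 mult_zero_right)
next
  fix L assume "has_vderiv N sph2 L m"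
  then have eq: "L = (\<lambda>v. 2 * (m$3 * v$3 + m$4 * v$4 + m$5 * v$5))"
    using vderiv_unique[OF Q pr _ deriv_sph2[OF Q]] by blast
  show "L v = 0" unfolding eq by (simp only: o2 mult_zero_right)
qed

definition pt :: "'a::field \<Rightarrow> 'a \<Rightarrow> 'a ^ 6" where
  "pt s1 s2 = (\<chi> i. if i = 2 then s1 else if i = 5 then s2 else 0)"

lemma pt_comp: "pt s1 s2 $ 0 = 0" "pt s1 s2 $ 1 = 0" "pt s1 s2 $ 2 = s1"
  "pt s1 s2 $ 3 = 0" "pt s1 s2 $ 4 = 0" "pt s1 s2 $ 5 = s2"
  unfolding pt_def by simp_all

lemma crit_pt:
  fixes N :: "'a::field_char_0 \<Rightarrow> real"
  assumes Q: "is_Qp p N" and t: "N t \<le> 1" and s1: "s1 * s1 = 1" and s2: "s2 * s2 = (1::'a)"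
  shows "pt s1 s2 \<in> rank0_critical N t R1 R2"
proof -
  let ?m = "pt s1 s2"
  have tan: "v$2 = 0 \<and> v$5 = 0" if "v \<in> tangent_SS N ?m" for v
  proof -
    have "2 * (?m$0 * v$0 + ?m$1 * v$1 + ?m$2 * v$2) = 0"
      using that deriv_sph1[OF Q, of ?m] unfolding tangent_SS_def by blast
    then have "s1 * v$2 = 0" by (simp add: pt_comp)
    then have a: "v$2 = 0" using s1 by (metis mult_zero_left zero_neq_one mult_eq_0_iff)
    have "2 * (?m$3 * v$3 + ?m$4 * v$4 + ?m$5 * v$5) = 0"
      using that deriv_sph2[OF Q, of ?m] unfolding tangent_SS_def by blast
    then have "s2 * v$5 = 0" by (simp add: pt_comp)
    then have "v$5 = 0" using s2 by (metis mult_zero_left zero_neq_one mult_eq_0_iff)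
    with a show ?thesis by simp
  qed
  have "?m \<in> SS" unfolding SS_def sph1_def sph2_def using s1 s2 by (simp add: pt_comp power2_eq_square)
  moreover have "dvanishes N (Jfun R1 R2) ?m"
    unfolding dvanishes_def using deriv_J[OF Q] tan by fastforce
  moreover have "dvanishes N (Hfun t) ?m"
    unfolding dvanishes_def using deriv_H[OF Q t, of ?m] tan by (fastforce simp: pt_comp)
  ultimately show ?thesis unfolding rank0_critical_def by blast
qed

lemma crit_char:
  fixes N :: "'a::field_char_0 \<Rightarrow> real"
  assumes Q: "is_Qp p N" and pr: "prime p" and R1: "R1 \<noteq> 0" and R2: "R2 \<noteq> 0"
    and m: "m \<in> rank0_critical N t R1 R2"
  shows "m$0 = 0 \<and> m$1 = 0 \<and> m$3 = 0 \<and> m$4 = 0 \<and> (m$2 = 1 \<or> m$2 = -1) \<and> (m$5 = 1 \<or> m$5 = -1)"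
proof -
  from m have ss: "m \<in> SS" and dj: "dvanishes N (Jfun R1 R2) m" unfolding rank0_critical_def by auto
  from dj obtain L where L: "has_vderiv N (Jfun R1 R2) L m" "\<forall>v\<in>tangent_SS N m. L v = 0"
    unfolding dvanishes_def by blast
  have LJ: "L = (\<lambda>v. R1 * v$2 + R2 * v$5)" using vderiv_unique[OF Q pr L(1) deriv_J[OF Q]] .
  have z: "R1 * v$2 + R2 * v$5 = 0" if "m$0 * v$0 + m$1 * v$1 + m$2 * v$2 = 0"
     "m$3 * v$3 + m$4 * v$4 + m$5 * v$5 = 0" for v :: "'a ^ 6"
    using L(2) tangent_mem[OF Q pr that] LJ by auto
  define u1 where "u1 = (\<chi> i. if i = 0 then m$2 else if i = (2::6) then - m$0 else 0)"
  define u2 where "u2 = (\<chi> i. if i = 1 then m$2 else if i = (2::6) then - m$1 else 0)"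
  define u3 where "u3 = (\<chi> i. if i = 3 then m$5 else if i = (5::6) then - m$3 else 0)"
  define u4 where "u4 = (\<chi> i. if i = 4 then m$5 else if i = (5::6) then - m$4 else 0)"
  have "R1 * (- m$0) = 0" using z[of u1] unfolding u1_def by (simp add: algebra_simps)
  then have x1: "m$0 = 0" using R1 by simp
  have "R1 * (- m$1) = 0" using z[of u2] unfolding u2_def by (simp add: algebra_simps)
  then have y1: "m$1 = 0" using R1 by simp
  have "R2 * (- m$3) = 0" using z[of u3] unfolding u3_def by (simp add: algebra_simps)
  then have x2: "m$3 = 0" using R2 by simp
  have "R2 * (- m$4) = 0" using z[of u4] unfolding u4_def by (simp add: algebra_simps)
  then have y2: "m$4 = 0" using R2 by simp
  have "(m$2)^2 = 1" "(m$5)^2 = 1" using ss x1 y1 x2 y2 unfolding SS_def sph1_def sph2_def by auto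
  then have "m$2 = 1 \<or> m$2 = -1" "m$5 = 1 \<or> m$5 = -1" by (simp_all add: power2_eq_1_iff)
  with x1 y1 x2 y2 show ?thesis by simp
qed

theorem proposition2p4:
  fixes p :: nat and N :: "'a::field_char_0 \<Rightarrow> real" and t R1 R2 :: 'a
  assumes "prime p"
    and "is_Qp p N"
    and "t \<in> Zp N"
    and "0 < N R1" and "N R1 < N R2"
  shows "coords6 ` rank0_critical N t R1 R2 =
           {(0, 0, 1, 0, 0, 1), (0, 0, -1, 0, 0, 1), (0, 0, 1, 0, 0, -1), (0, 0, -1, 0, 0, -1)}"
proof -
  have Q: "is_Qp p N" and pr: "prime p" by fact+
  have t: "N t \<le> 1" using assms(3) unfolding Zp_def by simp
  have R1: "R1 \<noteq> 0" using assms(4) Nprops(1)[OF Q, of R1] by auto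
  have R2: "R2 \<noteq> 0" using assms(4,5) Nprops(1)[OF Q, of R2] by auto
  have cp: "coords6 (pt s1 s2) = (0, 0, s1, 0, 0, s2)" for s1 s2 :: 'a
    unfolding coords6_def by (simp add: pt_comp)
  show ?thesis
  proof
    show "coords6 ` rank0_critical N t R1 R2 \<subseteq> {(0, 0, 1, 0, 0, 1), (0, 0, -1, 0, 0, 1), (0, 0, 1, 0, 0, -1), (0, 0, -1, 0, 0, -1)}"
    proof
      fix x assume "x \<in> coords6 ` rank0_critical N t R1 R2"
      then obtain m where m: "m \<in> rank0_critical N t R1 R2" "x = coords6 m" by blast
      show "x \<in> {(0, 0, 1, 0, 0, 1), (0, 0, -1, 0, 0, 1), (0, 0, 1, 0, 0, -1), (0, 0, -1, 0, 0, -1)}"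
        using crit_char[OF Q pr R1 R2 m(1)] m(2) unfolding coords6_def by auto
    qed
  next
    have "pt s1 s2 \<in> rank0_critical N t R1 R2" if "s1 = 1 \<or> s1 = -1" "s2 = 1 \<or> s2 = -1" for s1 s2 :: 'a
      using crit_pt[OF Q t, of s1 s2] that by auto
    then show "{(0, 0, 1, 0, 0, 1), (0, 0, -1, 0, 0, 1), (0, 0, 1, 0, 0, -1), (0, 0, -1, 0, 0, -1)} \<subseteq> coords6 ` rank0_critical N t R1 R2"
      by (metis (no_types, lifting) cp empty_subsetI image_eqI insert_subset)
  qed
qed

end
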